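(* Let $N\ge3$, $\frac{N}{N-1}<p<2$, $\xi=(p-1)(N-1)$, $\beta=\frac{p-1}{\xi-1}$, $\sigma=\frac{2-p}{p-1}$, and let $\kappa$ be a non-negative continuous function on $\overline{B_1}$ with $\kappa(0)=0$. There is a constant $C>0$ such that for all $R\in(0,1)$, $\delta\in(0,1)$, $t>1$ and all $\varphi\in X$ with $\|\varphi\|_X\le R$: (1) $\big\|\kappa\,|\nabla w_t+\nabla\varphi|^p\big\|_Y\le C\Big(R^p+\sup_{|z|<\delta}|\kappa(z)|+\dfrac{1}{t^{\frac{p}{p-1}}\delta^{(N-1)p-\sigma-2}}\Big)$; (2) $\big\||\nabla w_t+\nabla\varphi|^p-|\nabla w_t|^p-p|\nabla w_t|^{p-2}\nabla w_t\cdot\nabla\varphi\big\|_Y\le CR^p$. (In the paper this is stated for both $\kappa=\kappa_1$ and $\kappa=\kappa_2$.)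
   Context: $B_1$ is the open unit ball of $\mathbb{R}^N$. $w_t(x)=\int_{|x|}^1\frac{dy}{(ty^{\xi}+\beta y)^{1/(p-1)}}$. $\|\varphi\|_X=\sup_{0<|x|\le1}\{|x|^{\sigma}|\varphi(x)|+|x|^{\sigma+1}|\nabla\varphi(x)|\}$, $\|f\|_Y=\sup_{0<|x|\le1}|x|^{\sigma+2}|f(x)|$; $X$ is the set of functions on $\overline{B_1}\setminus\{0\}$ with finite $X$-norm vanishing on $\partial B_1$. *)

theory Defs
  imports "HOL-Analysis.Analysis"
begin

definition xi :: "real \<Rightarrow> real \<Rightarrow> real" where
  "xi N p = (p - 1) * (N - 1)"

definition beta :: "real \<Rightarrow> real \<Rightarrow> real" where
  "beta N p = (p - 1) / (xi N p - 1)"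

definition sigma :: "real \<Rightarrow> real" where
  "sigma p = (2 - p) / (p - 1)"

definition punct :: "'a::euclidean_space set" where
  "punct = cball 0 1 - {0}"

definition grad :: "('a::euclidean_space \<Rightarrow> real) \<Rightarrow> 'a \<Rightarrow> 'a" where
  "grad f x = (\<Sum>b\<in>Basis. frechet_derivative f (at x within punct) b *\<^sub>R b)"

definition w :: "real \<Rightarrow> real \<Rightarrow> 'a::euclidean_space \<Rightarrow> real" where
  "w p t x = integral {norm x..1}
      (\<lambda>y. 1 / (t * y powr xi (real DIM('a)) p + beta (real DIM('a)) p * y) powr (1 / (p - 1)))"

definition normX :: "real \<Rightarrow> ('a::euclidean_space \<Rightarrow> real) \<Rightarrow> real" where
  "normX p \<phi> = (SUP x\<in>punct. norm x powr sigma p * \<bar>\<phi> x\<bar>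
                    + norm x powr (sigma p + 1) * norm (grad \<phi> x))"

definition inX :: "real \<Rightarrow> ('a::euclidean_space \<Rightarrow> real) \<Rightarrow> bool" where
  "inX p \<phi> \<longleftrightarrow> (\<forall>x\<in>punct. \<phi> differentiable (at x within punct))
     \<and> bdd_above ((\<lambda>x. norm x powr sigma p * \<bar>\<phi> x\<bar>
                    + norm x powr (sigma p + 1) * norm (grad \<phi> x)) ` punct)
     \<and> (\<forall>x. norm x = 1 \<longrightarrow> \<phi> x = 0)"

definition normY :: "real \<Rightarrow> ('a::euclidean_space \<Rightarrow> real) \<Rightarrow> real" where
  "normY p f = (SUP x\<in>punct. norm x powr (sigma p + 2) * \<bar>f x\<bar>)"

definition inY :: "real \<Rightarrow> ('a::euclidean_space \<Rightarrow> real) \<Rightarrow> bool" where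
  "inY p f \<longleftrightarrow> bdd_above ((\<lambda>x. norm x powr (sigma p + 2) * \<bar>f x\<bar>) ` punct)"

end

theory Submission
  imports Defs
begin


lemma young_gen:
  fixes X B \<theta> :: real
  assumes "0 \<le> X" "0 < B" "0 \<le> \<theta>" "\<theta> \<le> 1"
  shows "X powr \<theta> * B powr (1 - \<theta>) \<le> \<theta> * X + (1 - \<theta>) * B"
proof (cases "X = 0")
  case True
  then show ?thesis using assms by auto
next
  case False
  then show ?thesis using Youngs_inequality_0[of \<theta> "1-\<theta>" X B] assms by auto
qed

lemma powr_sq_mult: "(r::real) > 0 \<Longrightarrow> r powr a * r^2 = r powr (a+2)"
proof -
  assume "r > 0"
  then have "r powr a * r^2 = r powr a * r powr 2" by simp
  also have "\<dots> = r powr (a+2)" by (rule powr_add[symmetric])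
  finally show ?thesis .
qed

lemma norm_powr2:
  fixes v :: "'a::real_inner"
  shows "norm v powr p = (norm v ^ 2) powr (p/2)"
  by (simp add: powr_powr flip: powr_numeral)

lemma ineq_lower:
  fixes a b :: "'a::real_inner" and p :: real
  assumes "a \<noteq> 0" "1 < p"
  shows "p * (norm a powr (p-2)) * (a \<bullet> b) \<le> norm (a+b) powr p - norm a powr p"
proof -
  define r where "r = norm a"
  define u where "u = norm (a+b)"
  have r0: "r > 0" using assms r_def by auto
  have ab: "a \<bullet> b \<le> r * u - r^2"
  proof -
    have "a \<bullet> b = a \<bullet> (a+b) - r^2" by (simp add: r_def inner_add_right power2_norm_eq_inner)
    moreover have "a \<bullet> (a+b) \<le> r * u" unfolding r_def u_def by (rule norm_cauchy_schwarz)
    ultimately show ?thesis by linarith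
  qed
  have pp: "p * r powr (p-2) \<ge> 0" using assms by auto
  have "p * r powr (p-2) * (a \<bullet> b) \<le> p * r powr (p-2) * (r * u - r^2)"
    using mult_left_mono[OF ab pp] .
  also have "\<dots> = p * (r powr (p-1) * u) - p * r powr p"
  proof -
    have "r powr (p-2) * r = r powr (p-1)"
    proof -
      have "r powr (p-1) = r powr ((p-2) + 1)" by simp
      also have "\<dots> = r powr (p-2) * r powr 1" by (rule powr_add)
      finally show ?thesis using r0 by simp
    qed
    moreover have "r powr (p-2) * r^2 = r powr p"
    proof -
      have "r powr (p-2) * r^2 = r powr (p-2) * r powr 2" using r0 by simp
      also have "\<dots> = r powr (p-2+2)" by (rule powr_add[symmetric])
      finally show ?thesis by simp
    qed
    ultimately show ?thesis by (simp add: algebra_simps)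
  qed
  also have "\<dots> \<le> u powr p - r powr p"
  proof (cases "u = 0")
    case True
    then show ?thesis using assms r0 by auto
  next
    case False
    then have u0: "u > 0" using u_def by auto
    have "(r powr p) powr ((p-1)/p) * (u powr p) powr (1/p) \<le> (p-1)/p * r powr p + 1/p * u powr p"
      using Youngs_inequality_0[of "(p-1)/p" "1/p" "r powr p" "u powr p"] assms r0 u0
      by (simp add: field_simps)
    moreover have "(r powr p) powr ((p-1)/p) = r powr (p-1)" using assms by (simp add: powr_powr)
    moreover have "(u powr p) powr (1/p) = u" using assms u0 by (simp add: powr_powr)
    ultimately have "r powr (p-1) * u \<le> (p-1)/p * r powr p + 1/p * u powr p" by simp
    then have "p * (r powr (p-1) * u) \<le> p * ((p-1)/p * r powr p + 1/p * u powr p)"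
      using assms by simp
    also have "\<dots> = (p-1) * r powr p + u powr p" using assms by (simp add: field_simps)
    finally have "p * (r powr (p-1) * u) \<le> (p-1) * r powr p + u powr p" .
    moreover have "(p-1) * r powr p = p * r powr p - r powr p" by (simp add: algebra_simps)
    ultimately show ?thesis by linarith
  qed
  finally show ?thesis unfolding r_def u_def .
qed

lemma ineq_upper_small:
  fixes a b :: "'a::real_inner" and p :: real
  assumes "a \<noteq> 0" "1 < p" "p < 2" "norm b \<le> norm a"
  shows "norm (a+b) powr p - norm a powr p - p * (norm a powr (p-2)) * (a \<bullet> b) \<le> norm b powr p"
proof -
  define r where "r = norm a"
  define X where "X = norm (a+b) ^ 2"
  have r0: "r > 0" using assms r_def by auto
  have X: "X = r^2 + 2 * (a \<bullet> b) + norm b ^ 2"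
    by (simp add: X_def r_def power2_norm_eq_inner inner_add_left inner_add_right inner_commute)
  have "X powr (p/2) * (r^2) powr (1 - p/2) \<le> (p/2) * X + (1 - p/2) * r^2"
    using young_gen[of X "r^2" "p/2"] assms r0 X_def by auto
  moreover have "(r^2) powr (1 - p/2) = r powr (2 - p)" using r0
    by (simp add: powr_powr flip: powr_numeral)
  ultimately have 1: "X powr (p/2) * r powr (2 - p) \<le> (p/2) * X + (1 - p/2) * r^2" by simp
  have rr: "r powr (2-p) * r powr (p-2) = 1" using r0 by (simp flip: powr_add)
  have r2: "r^2 * r powr (p-2) = r powr p" using powr_sq_mult[OF r0, of "p-2"] by (simp add: mult.commute)
  have "X powr (p/2) = X powr (p/2) * r powr (2 - p) * r powr (p-2)" using rr by (simp add: mult.assoc)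
  also have "\<dots> \<le> ((p/2) * X + (1 - p/2) * r^2) * r powr (p-2)"
    using mult_right_mono[OF 1, of "r powr (p-2)"] by simp
  also have "\<dots> = r powr p + p * r powr (p-2) * (a \<bullet> b) + (p/2) * r powr (p-2) * norm b ^ 2"
    unfolding X using r2 by (simp add: algebra_simps)
  finally have 2: "norm (a+b) powr p - r powr p - p * r powr (p-2) * (a \<bullet> b) \<le> (p/2) * r powr (p-2) * norm b ^ 2"
    by (simp add: X_def norm_powr2[of "a+b" p])
  have 3: "r powr (p-2) * norm b ^ 2 \<le> norm b powr p"
  proof (cases "b = 0")
    case True then show ?thesis using assms by simp
  next
    case False
    then have b0: "norm b > 0" by simp
    have "norm b powr (2-p) \<le> r powr (2-p)" using assms b0 r_def by (intro powr_mono2) auto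
    then have "norm b powr (2-p) * r powr (p-2) \<le> 1" using rr r0
      by (metis mult_right_mono powr_ge_zero)
    then have "norm b powr p * (norm b powr (2-p) * r powr (p-2)) \<le> norm b powr p"
      by (simp add: mult_left_le)
    moreover have "norm b powr p * (norm b powr (2-p) * r powr (p-2)) = r powr (p-2) * norm b ^ 2"
    proof -
      have e1: "norm b powr p * norm b powr (2-p) = norm b powr (p + (2-p))" by (rule powr_add[symmetric])
      have "norm b powr p * (norm b powr (2-p) * r powr (p-2)) = (norm b powr p * norm b powr (2-p)) * r powr (p-2)"
        by (rule mult.assoc[symmetric])
      also have "\<dots> = norm b ^ 2 * r powr (p-2)" using e1 b0 by simp
      also have "\<dots> = r powr (p-2) * norm b ^ 2" by (rule mult.commute)
      finally show ?thesis .
    qed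
    ultimately show ?thesis by simp
  qed
  have "(p/2) * r powr (p-2) \<le> 1 * r powr (p-2)"
    using assms by (intro mult_right_mono) auto
  then have "(p/2) * r powr (p-2) * norm b ^ 2 \<le> r powr (p-2) * norm b ^ 2"
    by (intro mult_right_mono) auto
  with 2 3 show ?thesis unfolding r_def by linarith
qed

lemma ineq_sum_pow:
  fixes a b :: "'a::real_normed_vector" and p :: real
  assumes "1 < p"
  shows "norm (a+b) powr p \<le> 2 powr p * (norm a powr p + norm b powr p)"
proof -
  define m where "m = max (norm a) (norm b)"
  have "norm (a+b) \<le> 2 * m" using norm_triangle_ineq[of a b] m_def by linarith
  then have "norm (a+b) powr p \<le> (2*m) powr p" using assms by (intro powr_mono2) auto
  also have "\<dots> = 2 powr p * m powr p" using m_def by (simp add: powr_mult)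
  also have "m powr p \<le> norm a powr p + norm b powr p" unfolding m_def max_def by auto
  finally show ?thesis by simp
qed

lemma ineq_F:
  fixes a b :: "'a::real_inner" and p :: real
  assumes "1 < p" "p < 2"
  shows "\<bar>norm (a+b) powr p - norm a powr p - p * (norm a powr (p-2)) * (a \<bullet> b)\<bar> \<le> 6 * norm b powr p"
proof (cases "a = 0")
  case True then show ?thesis by simp
next
  case an: False
  have lo: "0 \<le> norm (a+b) powr p - norm a powr p - p * (norm a powr (p-2)) * (a \<bullet> b)"
    using ineq_lower[OF an assms(1), of b] by simp
  show ?thesis
  proof (cases "norm b \<le> norm a")
    case True
    then show ?thesis using ineq_upper_small[OF an assms True] lo by simp
  next
    case False
    have "norm (a+b) \<le> 2 * norm b" using norm_triangle_ineq[of a b] False by linarith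
    then have 1: "norm (a+b) powr p \<le> (2 * norm b) powr p" using assms by (intro powr_mono2) auto
    have 2: "(2 * norm b) powr p \<le> 4 * norm b powr p"
    proof -
      have "2 powr p \<le> 2 powr 2" using assms by (intro powr_mono) auto
      then show ?thesis by (simp add: powr_mult mult_right_mono)
    qed
    have "- (p * (norm a powr (p-2)) * (a \<bullet> b)) \<le> p * norm a powr (p-2) * (norm a * norm b)"
    proof -
      have "\<bar>a \<bullet> b\<bar> \<le> norm a * norm b" by (rule Cauchy_Schwarz_ineq2)
      then have "- (a \<bullet> b) \<le> norm a * norm b" by linarith
      moreover have "p * norm a powr (p-2) \<ge> 0" using assms by simp
      ultimately have "p * norm a powr (p-2) * (- (a \<bullet> b)) \<le> p * norm a powr (p-2) * (norm a * norm b)"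
        by (rule mult_left_mono)
      then show ?thesis by simp
    qed
    also have "\<dots> = p * norm a powr (p-1) * norm b"
    proof -
      have "norm a powr (p-1) = norm a powr ((p-2) + 1)" by simp
      also have "\<dots> = norm a powr (p-2) * norm a powr 1" by (rule powr_add)
      finally have e: "norm a powr (p-1) = norm a powr (p-2) * norm a" using an by simp
      show ?thesis unfolding e by (simp only: ac_simps)
    qed
    also have "\<dots> \<le> p * norm b powr (p-1) * norm b" using False assms
      by (intro mult_right_mono mult_left_mono powr_mono2) auto
    also have "\<dots> = p * norm b powr p"
    proof -
      have "norm b powr (p-1) * norm b = norm b powr (p-1) * norm b powr 1" using False by simp
      also have "\<dots> = norm b powr (p-1+1)" by (rule powr_add[symmetric])
      finally show ?thesis by (simp add: mult.assoc)
    qed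
    also have "\<dots> \<le> 2 * norm b powr p" using assms by (intro mult_right_mono) auto
    finally have 3: "- (p * (norm a powr (p-2)) * (a \<bullet> b)) \<le> 2 * norm b powr p" .
    have "norm (a+b) powr p - norm a powr p - p * (norm a powr (p-2)) * (a \<bullet> b) \<le> 6 * norm b powr p"
      using 1 2 3 powr_ge_zero[of "norm a" p] by linarith
    with lo show ?thesis by simp
  qed
qed



lemma deriv_dir_eq:
  fixes f :: "'a::real_normed_vector \<Rightarrow> real"
  assumes f1: "(f has_derivative f1) (at x within S)" and f2: "(f has_derivative f2) (at x within S)"
    and v: "v \<noteq> 0" and e: "e > 0" and inS: "\<And>d. 0 < d \<Longrightarrow> d < e \<Longrightarrow> x + d *\<^sub>R v \<in> S"
  shows "f1 v = f2 v"
proof -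
  have l1: "bounded_linear f1" and l2: "bounded_linear f2" using f1 f2 by (auto simp: has_derivative_def)
  have t1: "((\<lambda>y. (1 / norm(y - x)) *\<^sub>R (f y - (f x + f1 (y - x)))) \<longlongrightarrow> 0) (at x within S)"
    using f1 by (simp add: has_derivative_within)
  have t2: "((\<lambda>y. (1 / norm(y - x)) *\<^sub>R (f y - (f x + f2 (y - x)))) \<longlongrightarrow> 0) (at x within S)"
    using f2 by (simp add: has_derivative_within)
  have t: "((\<lambda>y. (1 / norm(y - x)) *\<^sub>R (f1 (y - x) - f2 (y - x))) \<longlongrightarrow> 0) (at x within S)"
    using tendsto_diff[OF t2 t1] by (simp add: algebra_simps)
  have fl: "filterlim (\<lambda>d. x + d *\<^sub>R v) (at x within S) (at_right 0)"
    unfolding filterlim_at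
  proof
    have "((\<lambda>d. x + d *\<^sub>R v) \<longlongrightarrow> x + 0 *\<^sub>R v) (at_right 0)"
      by (intro tendsto_intros)
    then show "((\<lambda>d. x + d *\<^sub>R v) \<longlongrightarrow> x) (at_right 0)" by simp
    show "\<forall>\<^sub>F d in at_right 0. x + d *\<^sub>R v \<in> S \<and> x + d *\<^sub>R v \<noteq> x"
      unfolding eventually_at_right_field using e v inS
      by (intro exI[of _ e]) auto
  qed
  have c: "((\<lambda>d. (1 / norm((x + d *\<^sub>R v) - x)) *\<^sub>R (f1 ((x + d *\<^sub>R v) - x) - f2 ((x + d *\<^sub>R v) - x))) \<longlongrightarrow> 0) (at_right 0)"
    using tendsto_compose_filtermap[of _ _ _ "at x within S"] t fl
    by (rule_tac filterlim_compose[OF t fl])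
  have ev: "\<forall>\<^sub>F d in at_right 0. (1 / norm((x + d *\<^sub>R v) - x)) *\<^sub>R (f1 ((x + d *\<^sub>R v) - x) - f2 ((x + d *\<^sub>R v) - x)) = (f1 v - f2 v) / norm v"
    unfolding eventually_at_right_field
  proof (intro exI[of _ 1] conjI allI impI)
    fix d :: real assume d: "0 < d" "d < 1"
    have "f1 (d *\<^sub>R v) = d * f1 v" "f2 (d *\<^sub>R v) = d * f2 v"
      using linear_scale[OF bounded_linear.linear[OF l1]] linear_scale[OF bounded_linear.linear[OF l2]] by auto
    then show "(1 / norm((x + d *\<^sub>R v) - x)) *\<^sub>R (f1 ((x + d *\<^sub>R v) - x) - f2 ((x + d *\<^sub>R v) - x)) = (f1 v - f2 v) / norm v"
      using d v by (simp add: field_simps)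
  qed simp
  have "((\<lambda>d. (f1 v - f2 v) / norm v) \<longlongrightarrow> 0) (at_right (0::real))"
    using tendsto_cong[OF ev] c by simp
  then have "(f1 v - f2 v) / norm v = 0"
    using tendsto_const_iff[of "at_right (0::real)" "(f1 v - f2 v) / norm v" 0] by simp
  then show ?thesis using v by simp
qed

lemma frechet_punct:
  fixes f :: "'a::euclidean_space \<Rightarrow> real"
  assumes x: "x \<in> punct" and D: "(f has_derivative D) (at x within punct)"
  shows "frechet_derivative f (at x within punct) = D"
proof -
  define F where "F = frechet_derivative f (at x within punct)"
  have Fd: "(f has_derivative F) (at x within punct)"
    using D F_def frechet_derivative_works differentiableI by blast
  have lF: "linear F" and lD: "linear D" using Fd D by (auto simp: has_derivative_def bounded_linear.linear)
  have x0: "x \<noteq> 0" and x1: "norm x \<le> 1" using x by (auto simp: punct_def)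
  have neg: "F v = D v" if vx: "x \<bullet> v < 0" for v
  proof -
    have v: "v \<noteq> 0" using vx by auto
    define e where "e = min (- 2 * (x \<bullet> v) / norm v ^ 2) (norm x / norm v)"
    have "- 2 * (x \<bullet> v) / norm v ^ 2 > 0" using v vx by (intro divide_pos_pos) auto
    then have e: "e > 0" using v x0 vx by (auto simp: e_def)
    show ?thesis
    proof (rule deriv_dir_eq[OF Fd D v e])
      fix d :: real assume d: "0 < d" "d < e"
      have "d * norm v ^ 2 < - 2 * (x \<bullet> v)" using d v unfolding e_def by (auto simp: field_simps)
      then have "d * (d * norm v ^ 2) < d * (- 2 * (x \<bullet> v))" by (rule mult_strict_left_mono) (use d in simp)
      then have "norm (x + d *\<^sub>R v) ^ 2 < norm x ^ 2"
        by (simp add: power2_norm_eq_inner inner_add_left inner_add_right inner_commute algebra_simps)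
      then have n1: "norm (x + d *\<^sub>R v) \<le> 1" using x1
        by (smt (verit) norm_ge_zero power_mono)
      have "d * norm v < norm x" using d v unfolding e_def by (auto simp: field_simps)
      then have "x + d *\<^sub>R v \<noteq> 0"
        by (metis add.commute add_diff_cancel_right' diff_zero norm_minus_cancel norm_scaleR abs_of_pos d(1) less_irrefl eq_neg_iff_add_eq_0)
      with n1 show "x + d *\<^sub>R v \<in> punct" by (simp add: punct_def)
    qed
  qed
  have Fx: "F x = D x"
  proof -
    have "F (- x) = D (- x)" using x0 by (intro neg) simp
    then show ?thesis using linear_neg[OF lF] linear_neg[OF lD] by simp
  qed
  have "F v = D v" for v
  proof -
    define c where "c = (\<bar>x \<bullet> v\<bar> + 1) / norm x ^ 2"
    have "x \<bullet> (v - c *\<^sub>R x) = x \<bullet> v - (\<bar>x \<bullet> v\<bar> + 1)"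
      using x0 by (simp add: c_def inner_diff_right power2_norm_eq_inner)
    then have "x \<bullet> (v - c *\<^sub>R x) < 0" by linarith
    then have "F (v - c *\<^sub>R x) = D (v - c *\<^sub>R x)" by (rule neg)
    then show ?thesis using Fx by (simp add: linear_diff[OF lF] linear_diff[OF lD] linear_scale[OF lF] linear_scale[OF lD])
  qed
  then show ?thesis unfolding F_def[symmetric] by auto
qed

lemma grad_formula:
  fixes f :: "'a::euclidean_space \<Rightarrow> real"
  assumes x: "x \<in> punct" and D: "(f has_derivative (\<lambda>h. c * (h \<bullet> u))) (at x within punct)"
  shows "grad f x = c *\<^sub>R u"
proof -
  have "grad f x = (\<Sum>b\<in>Basis. (c * (b \<bullet> u)) *\<^sub>R b)"
    unfolding grad_def frechet_punct[OF x D] ..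
  also have "\<dots> = c *\<^sub>R (\<Sum>b\<in>Basis. (u \<bullet> b) *\<^sub>R b)"
    by (simp add: scaleR_sum_right inner_commute)
  also have "\<dots> = c *\<^sub>R u" by (simp add: euclidean_representation)
  finally show ?thesis .
qed

lemma G_deriv:
  fixes g :: "real \<Rightarrow> real"
  assumes g: "continuous_on {0<..} g" and r: "0 < r" "r \<le> 1"
  shows "((\<lambda>s. integral {s..1} g) has_real_derivative - g r) (at r within {0<..1})"
proof -
  define a where "a = r / 2"
  have a: "0 < a" "a < r" using r by (auto simp: a_def)
  have "continuous_on {a..1} g" by (rule continuous_on_subset[OF g]) (use a in auto)
  then have "((\<lambda>s. integral {s..1} g) has_real_derivative - g r) (at r within {a..1})"
    using integral_has_real_derivative'[of a 1 g r] a r by auto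
  moreover have "at r within {a..1} = at r within {0<..1}"
    by (rule at_within_nhd[of _ "{a<..}"]) (use a r in auto)
  ultimately show ?thesis by simp
qed

lemma grad_radial:
  fixes g :: "real \<Rightarrow> real" and x :: "'a::euclidean_space"
  assumes g: "continuous_on {0<..} g" and x: "x \<in> punct"
  shows "grad (\<lambda>y. integral {norm y..1} g) x = (- g (norm x)) *\<^sub>R sgn x"
proof -
  have x0: "x \<noteq> 0" and x1: "norm x \<le> 1" using x by (auto simp: punct_def)
  have Gd: "((\<lambda>s. integral {s..1} g) has_derivative (\<lambda>h. (- g s) * h)) (at s within {0<..1})"
    if "s \<in> {0<..1}" for s
  proof -
    have "0 < s" "s \<le> 1" using that by auto
    from G_deriv[OF g this] show ?thesis unfolding has_field_derivative_def .
  qed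
  have nd: "(norm has_derivative (\<lambda>h. h \<bullet> sgn x)) (at x within punct)"
    using has_derivative_norm[OF x0] by (rule has_derivative_at_withinI)
  have im: "norm ` punct \<subseteq> {0<..1::real}" by (auto simp: punct_def)
  have "((\<lambda>y. integral {norm y..1} g) has_derivative (\<lambda>h. (- g (norm x)) * (h \<bullet> sgn x))) (at x within punct)"
    using has_derivative_in_compose2[OF Gd im x nd] by simp
  then show ?thesis by (rule grad_formula[OF x])
qed



lemma radial_eq:
  fixes p \<xi> \<beta> t r :: real
  assumes p: "p > 1" and b: "\<beta> > 0" and t: "t > 0" and r: "r > 0"
  shows "r powr (p/(p-1)) * (1 / (t * r powr \<xi> + \<beta> * r) powr (1/(p-1))) powr p
         = 1 / (t * r powr (\<xi>-1) + \<beta>) powr (p/(p-1))"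
proof -
  define Q where "Q = t * r powr (\<xi>-1) + \<beta>"
  have Q: "Q > 0" using b t r by (simp add: Q_def add_pos_pos)
  have "r powr \<xi> = r powr ((\<xi>-1) + 1)" by simp
  also have "\<dots> = r powr (\<xi>-1) * r powr 1" by (rule powr_add)
  finally have "r powr \<xi> = r powr (\<xi>-1) * r powr 1" .
  then have 1: "t * r powr \<xi> + \<beta> * r = r * Q" using r by (simp add: Q_def algebra_simps)
  have "(1 / (r * Q) powr (1/(p-1))) powr p = 1 / ((r * Q) powr (1/(p-1))) powr p"
    using r Q by (simp add: powr_divide)
  also have "\<dots> = 1 / (r * Q) powr (p/(p-1))" by (simp add: powr_powr)
  also have "\<dots> = 1 / (r powr (p/(p-1)) * Q powr (p/(p-1)))" using r Q by (simp add: powr_mult)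
  finally have "r powr (p/(p-1)) * (1 / (r * Q) powr (1/(p-1))) powr p = 1 / Q powr (p/(p-1))"
    using r by simp
  then show ?thesis using 1 Q_def by simp
qed

lemma radial_bound1:
  fixes p \<xi> \<beta> t r :: real
  assumes p: "p > 1" and b: "\<beta> > 0" and t: "t > 0" and r: "r > 0"
  shows "1 / (t * r powr (\<xi>-1) + \<beta>) powr (p/(p-1)) \<le> 1 / \<beta> powr (p/(p-1))"
proof -
  have "\<beta> powr (p/(p-1)) \<le> (t * r powr (\<xi>-1) + \<beta>) powr (p/(p-1))"
    using p b t r by (intro powr_mono2) auto
  moreover have "0 < (t * r powr (\<xi>-1) + \<beta>) powr (p/(p-1))"
  proof -
    have "0 \<le> t * r powr (\<xi>-1)" using t by simp
    then show ?thesis using b by simp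
  qed
  ultimately show ?thesis using b by (intro divide_left_mono mult_pos_pos) auto
qed

lemma radial_bound2:
  fixes p \<xi> \<beta> t r \<delta> :: real
  assumes p: "p > 1" and xi: "\<xi> > 1" and b: "\<beta> > 0" and t: "t > 0" and d: "\<delta> > 0" "\<delta> \<le> r"
  shows "1 / (t * r powr (\<xi>-1) + \<beta>) powr (p/(p-1)) \<le> 1 / (t powr (p/(p-1)) * \<delta> powr ((\<xi>-1) * (p/(p-1))))"
proof -
  have "\<delta> powr (\<xi>-1) \<le> r powr (\<xi>-1)" using d xi by (intro powr_mono2) auto
  then have "t * \<delta> powr (\<xi>-1) \<le> t * r powr (\<xi>-1) + \<beta>" using t b
    by (smt (verit) mult_left_mono)
  then have "(t * \<delta> powr (\<xi>-1)) powr (p/(p-1)) \<le> (t * r powr (\<xi>-1) + \<beta>) powr (p/(p-1))"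
    using p t d by (intro powr_mono2) auto
  moreover have "(t * \<delta> powr (\<xi>-1)) powr (p/(p-1)) = t powr (p/(p-1)) * \<delta> powr ((\<xi>-1) * (p/(p-1)))"
    using t d by (simp add: powr_mult powr_powr)
  moreover have "t powr (p/(p-1)) * \<delta> powr ((\<xi>-1) * (p/(p-1))) > 0" using t d by simp
  moreover have "0 < (t * r powr (\<xi>-1) + \<beta>) powr (p/(p-1))"
  proof -
    have "0 \<le> t * r powr (\<xi>-1)" using t by simp
    then show ?thesis using b by simp
  qed
  ultimately show ?thesis by (intro divide_left_mono mult_pos_pos) auto
qed



theorem lemma3p2:
  fixes \<kappa> :: "'a::euclidean_space \<Rightarrow> real" and p :: real
  defines "N \<equiv> real DIM('a)"
  assumes N3: "DIM('a) \<ge> 3"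
    and p_lo: "N / (N - 1) < p" and p_hi: "p < 2"
    and kcont: "continuous_on (cball 0 1) \<kappa>"
    and knn: "\<forall>x\<in>cball 0 1. \<kappa> x \<ge> 0"
    and k0: "\<kappa> 0 = 0"
  shows "\<exists>C>0. \<forall>R \<delta> t (\<phi>::'a \<Rightarrow> real).
           0 < R \<and> R < 1 \<and> 0 < \<delta> \<and> \<delta> < 1 \<and> t > 1 \<and> inX p \<phi> \<and> normX p \<phi> \<le> R \<longrightarrow>
           (inY p (\<lambda>x. \<kappa> x * norm (grad (w p t) x + grad \<phi> x) powr p)
            \<and> normY p (\<lambda>x. \<kappa> x * norm (grad (w p t) x + grad \<phi> x) powr p)
              \<le> C * (R powr p + (SUP z\<in>ball 0 \<delta>. \<bar>\<kappa> z\<bar>)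
                     + 1 / (t powr (p / (p - 1)) * \<delta> powr ((N - 1) * p - sigma p - 2))))
           \<and> (inY p (\<lambda>x. norm (grad (w p t) x + grad \<phi> x) powr p - norm (grad (w p t) x) powr p
                   - p * norm (grad (w p t) x) powr (p - 2) * (grad (w p t) x \<bullet> grad \<phi> x))
              \<and> normY p (\<lambda>x. norm (grad (w p t) x + grad \<phi> x) powr p - norm (grad (w p t) x) powr p
                   - p * norm (grad (w p t) x) powr (p - 2) * (grad (w p t) x \<bullet> grad \<phi> x))
                \<le> C * R powr p)"
proof -
  have N3': "N \<ge> 3" using N3 unfolding N_def by simp
  have "N / (N - 1) > 1" using N3' by (simp add: field_simps)
  then have p1: "p > 1" using p_lo by linarith
  have "N < p * (N - 1)" using p_lo N3' by (simp add: field_simps)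
  then have xi1: "xi N p > 1" unfolding xi_def by (simp add: algebra_simps)
  define \<xi> where "\<xi> = xi N p"
  define \<beta> where "\<beta> = beta N p"
  define E where "E = p / (p - 1)"
  have bpos: "\<beta> > 0" using xi1 p1 unfolding \<beta>_def beta_def by simp
  have sig2: "sigma p + 2 = E" unfolding sigma_def E_def using p1 by (simp add: field_simps)
  have sig1: "(sigma p + 1) * p = E" unfolding sigma_def E_def using p1 by (simp add: field_simps)
  have expo: "(N - 1) * p - sigma p - 2 = (\<xi> - 1) * E"
    unfolding sigma_def E_def \<xi>_def xi_def using p1 by (simp add: field_simps)
  have Epos: "E > 0" using p1 by (simp add: E_def)
  obtain K where K': "\<forall>x\<in>cball 0 1. \<bar>\<kappa> x\<bar> \<le> K"
    using compact_imp_bounded[OF compact_continuous_image[OF kcont compact_cball]]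
    unfolding bounded_iff by auto
  have K: "\<And>x. x \<in> cball 0 1 \<Longrightarrow> \<bar>\<kappa> x\<bar> \<le> K" using K' by blast
  have K0: "K \<ge> 0" using K[of 0] by simp
  define B0 where "B0 = 1 / \<beta> powr E"
  have B0: "B0 > 0" using bpos by (simp add: B0_def)
  define C where "C = 2 powr p * (K + B0) + 6"
  have Cpos: "C > 0" using K0 B0 by (simp add: C_def add_nonneg_pos)
  have punct_ne: "punct \<noteq> ({}::'a set)"
  proof -
    obtain b :: 'a where "b \<in> Basis" using nonempty_Basis by blast
    then have "b \<in> punct" by (auto simp: punct_def)
    then show ?thesis by auto
  qed
  show ?thesis
  proof (intro exI[of _ C] conjI allI impI Cpos)
    fix R \<delta> t :: real and \<phi> :: "'a \<Rightarrow> real"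
    assume H: "0 < R \<and> R < 1 \<and> 0 < \<delta> \<and> \<delta> < 1 \<and> t > 1 \<and> inX p \<phi> \<and> normX p \<phi> \<le> R"
    then have R: "0 < R" and d: "0 < \<delta>" "\<delta> < 1" and t: "t > 1" and phX: "inX p \<phi>" and phR: "normX p \<phi> \<le> R"
      by auto
    define g where "g = (\<lambda>y::real. 1 / (t * y powr \<xi> + \<beta> * y) powr (1 / (p - 1)))"
    have tpos: "t > 0" using t by simp
    have wg: "w p t = (\<lambda>y::'a. integral {norm y..1} g)"
      by (rule ext) (simp add: w_def g_def \<xi>_def \<beta>_def N_def)
    have gc: "continuous_on {0<..} g"
    proof -
      have pos: "t * y powr \<xi> + \<beta> * y > 0" if "y > 0" for y
        using t bpos that by (simp add: add_pos_pos)
      show ?thesis unfolding g_def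
        by (intro continuous_intros) (auto dest: pos)
    qed
    have gpos: "g y > 0" if "y > 0" for y
    proof -
      have "t * y powr \<xi> + \<beta> * y > 0" using t bpos that by (simp add: add_pos_pos)
      then show ?thesis by (simp add: g_def)
    qed
    have ngw: "norm (grad (w p t) x) = g (norm x)" if x: "x \<in> punct" for x :: 'a
    proof -
      have x0: "x \<noteq> 0" using x by (auto simp: punct_def)
      have "grad (w p t) x = (- g (norm x)) *\<^sub>R sgn x"
        unfolding wg by (rule grad_radial[OF gc x])
      then show ?thesis using gpos[of "norm x"] x0 by (simp add: norm_sgn)
    qed
    have rpos: "norm x > 0" if x: "x \<in> punct" for x :: 'a
      using x by (auto simp: punct_def)
    have Aw: "norm x powr E * norm (grad (w p t) x) powr p = 1 / (t * norm x powr (\<xi>-1) + \<beta>) powr E"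
      if x: "x \<in> punct" for x :: 'a
    proof -
      have "norm (grad (w p t) x) = 1 / (t * norm x powr \<xi> + \<beta> * norm x) powr (1/(p-1))"
        using ngw[OF x] by (simp add: g_def)
      then show ?thesis unfolding E_def by (simp only:) (rule radial_eq[OF p1 bpos tpos rpos[OF x]])
    qed
    have A1: "norm x powr E * norm (grad (w p t) x) powr p \<le> B0" if x: "x \<in> punct" for x :: 'a
      using Aw[OF x] radial_bound1[OF p1 bpos tpos rpos[OF x], of \<xi>]
      unfolding B0_def E_def by linarith
    define T where "T = 1 / (t powr (p / (p - 1)) * \<delta> powr ((N - 1) * p - sigma p - 2))"
    have T0: "T \<ge> 0" unfolding T_def by simp
    have A2: "norm x powr E * norm (grad (w p t) x) powr p \<le> T" if x: "x \<in> punct" and xd: "\<delta> \<le> norm x" for x :: 'a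
      using Aw[OF x] radial_bound2[OF p1 xi1[folded \<xi>_def] bpos tpos d(1) xd]
      unfolding T_def expo E_def by linarith
    have Bphi: "norm x powr E * norm (grad \<phi> x) powr p \<le> R powr p" if x: "x \<in> punct" for x :: 'a
    proof -
      have "norm x powr sigma p * \<bar>\<phi> x\<bar> + norm x powr (sigma p + 1) * norm (grad \<phi> x) \<le> normX p \<phi>"
        unfolding normX_def using phX x unfolding inX_def by (intro cSUP_upper) auto
      moreover have "norm x powr sigma p * \<bar>\<phi> x\<bar> \<ge> 0" by simp
      ultimately have 1: "norm x powr (sigma p + 1) * norm (grad \<phi> x) \<le> R" using phR by linarith
      have "(norm x powr (sigma p + 1) * norm (grad \<phi> x)) powr p \<le> R powr p"
        using 1 p1 by (intro powr_mono2) auto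
      moreover have "(norm x powr (sigma p + 1) * norm (grad \<phi> x)) powr p = norm x powr E * norm (grad \<phi> x) powr p"
        using sig1 by (simp add: powr_mult powr_powr)
      ultimately show ?thesis by simp
    qed
    define S where "S = (SUP z\<in>ball 0 \<delta>. \<bar>\<kappa> z\<bar>)"
    have Sbdd: "bdd_above ((\<lambda>z. \<bar>\<kappa> z\<bar>) ` ball 0 \<delta>)"
      using K d by (intro bdd_aboveI2[of _ _ K]) auto
    have kS: "\<kappa> x \<le> S" if "x \<in> ball 0 \<delta>" for x
    proof -
      have "\<bar>\<kappa> x\<bar> \<le> S" unfolding S_def using Sbdd that by (intro cSUP_upper) auto
      then show ?thesis by simp
    qed
    have S0: "S \<ge> 0" using kS[of 0] d k0 by simp
    have kx: "0 \<le> \<kappa> x" "\<kappa> x \<le> K" if "x \<in> punct" for x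
      using knn K[of x] that by (auto simp: punct_def)
    have P1: "norm x powr (sigma p + 2) * \<bar>\<kappa> x * norm (grad (w p t) x + grad \<phi> x) powr p\<bar>
              \<le> C * (R powr p + S + T)" if x: "x \<in> punct" for x :: 'a
    proof -
      define a where "a = grad (w p t) x"
      define b where "b = grad \<phi> x"
      define rE where "rE = norm x powr E"
      have rE0: "rE \<ge> 0" by (simp add: rE_def)
      have ab: "norm (a+b) powr p \<le> 2 powr p * (norm a powr p + norm b powr p)"
        by (rule ineq_sum_pow[OF p1])
      have "norm x powr (sigma p + 2) * \<bar>\<kappa> x * norm (a + b) powr p\<bar> = \<kappa> x * (rE * norm (a+b) powr p)"
        using kx[OF x] by (simp add: sig2 rE_def)
      also have "\<dots> \<le> \<kappa> x * (rE * (2 powr p * (norm a powr p + norm b powr p)))"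
        using kx[OF x] rE0 ab by (intro mult_left_mono) auto
      also have "\<dots> = 2 powr p * (\<kappa> x * (rE * norm a powr p) + \<kappa> x * (rE * norm b powr p))"
        by (simp add: algebra_simps)
      also have "\<dots> \<le> 2 powr p * ((B0 * S + K * T) + K * R powr p)"
      proof -
        have 1: "\<kappa> x * (rE * norm a powr p) \<le> B0 * S + K * T"
        proof (cases "norm x < \<delta>")
          case True
          then have "\<kappa> x \<le> S" by (intro kS) simp
          moreover have "rE * norm a powr p \<le> B0" using A1[OF x] by (simp add: rE_def a_def)
          ultimately have "\<kappa> x * (rE * norm a powr p) \<le> S * B0"
            using kx[OF x] rE0 S0 by (intro mult_mono) auto
          then show ?thesis using K0 T0 by (simp add: mult.commute add_increasing2)
        next
          case False
          then have "rE * norm a powr p \<le> T" using A2[OF x] by (simp add: rE_def a_def)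
          then have "\<kappa> x * (rE * norm a powr p) \<le> K * T"
            using kx[OF x] rE0 K0 by (intro mult_mono) auto
          moreover have "B0 * S \<ge> 0" using B0 S0 by simp
          ultimately show ?thesis by linarith
        qed
        have 2: "\<kappa> x * (rE * norm b powr p) \<le> K * R powr p"
          using kx[OF x] rE0 K0 Bphi[OF x] by (intro mult_mono) (auto simp: rE_def b_def)
        show ?thesis using 1 2 by (intro mult_left_mono) auto
      qed
      also have "\<dots> \<le> 2 powr p * ((K + B0) * (R powr p + S + T))"
      proof -
        have "K * S \<ge> 0" "B0 * R powr p \<ge> 0" "B0 * T \<ge> 0" using K0 B0 S0 T0 by auto
        moreover have "(K + B0) * (R powr p + S + T) = K * R powr p + K * S + K * T + B0 * R powr p + B0 * S + B0 * T"
          by (simp add: algebra_simps)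
        ultimately have "(B0 * S + K * T) + K * R powr p \<le> (K + B0) * (R powr p + S + T)" by linarith
        then show ?thesis by (intro mult_left_mono) auto
      qed
      also have "\<dots> = 2 powr p * (K + B0) * (R powr p + S + T)" by (simp add: mult.assoc)
      also have "\<dots> \<le> C * (R powr p + S + T)"
        using S0 T0 by (intro mult_right_mono) (auto simp: C_def)
      finally show ?thesis unfolding a_def b_def .
    qed
    have P2: "norm x powr (sigma p + 2) * \<bar>norm (grad (w p t) x + grad \<phi> x) powr p - norm (grad (w p t) x) powr p
                   - p * norm (grad (w p t) x) powr (p - 2) * (grad (w p t) x \<bullet> grad \<phi> x)\<bar>
              \<le> C * R powr p" if x: "x \<in> punct" for x :: 'a
    proof -
      have "norm x powr (sigma p + 2) * \<bar>norm (grad (w p t) x + grad \<phi> x) powr p - norm (grad (w p t) x) powr p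
                   - p * norm (grad (w p t) x) powr (p - 2) * (grad (w p t) x \<bullet> grad \<phi> x)\<bar>
            \<le> norm x powr E * (6 * norm (grad \<phi> x) powr p)"
        unfolding sig2 by (intro mult_left_mono ineq_F p1 p_hi) auto
      also have "\<dots> \<le> 6 * R powr p" using Bphi[OF x] by simp
      also have "\<dots> \<le> C * R powr p" using K0 B0 by (intro mult_right_mono) (auto simp: C_def)
      finally show ?thesis .
    qed
    have bd1: "bdd_above ((\<lambda>x. norm x powr (sigma p + 2) * \<bar>\<kappa> x * norm (grad (w p t) x + grad \<phi> x) powr p\<bar>) ` punct)"
      using P1 by (intro bdd_aboveI2) auto
    have bd2: "bdd_above ((\<lambda>x. norm x powr (sigma p + 2) * \<bar>norm (grad (w p t) x + grad \<phi> x) powr p - norm (grad (w p t) x) powr p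
                   - p * norm (grad (w p t) x) powr (p - 2) * (grad (w p t) x \<bullet> grad \<phi> x)\<bar>) ` punct)"
      using P2 by (intro bdd_aboveI2) auto
    show "inY p (\<lambda>x. \<kappa> x * norm (grad (w p t) x + grad \<phi> x) powr p)"
      unfolding inY_def using bd1 .
    show "inY p (\<lambda>x. norm (grad (w p t) x + grad \<phi> x) powr p - norm (grad (w p t) x) powr p
                   - p * norm (grad (w p t) x) powr (p - 2) * (grad (w p t) x \<bullet> grad \<phi> x))"
      unfolding inY_def using bd2 .
    show "normY p (\<lambda>x. \<kappa> x * norm (grad (w p t) x + grad \<phi> x) powr p)
              \<le> C * (R powr p + (SUP z\<in>ball 0 \<delta>. \<bar>\<kappa> z\<bar>)
                     + 1 / (t powr (p / (p - 1)) * \<delta> powr ((N - 1) * p - sigma p - 2)))"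
      unfolding normY_def S_def[symmetric] T_def[symmetric]
      using P1 punct_ne by (intro cSUP_least) auto
    show "normY p (\<lambda>x. norm (grad (w p t) x + grad \<phi> x) powr p - norm (grad (w p t) x) powr p
                   - p * norm (grad (w p t) x) powr (p - 2) * (grad (w p t) x \<bullet> grad \<phi> x))
                \<le> C * R powr p"
      unfolding normY_def
      using P2 punct_ne by (intro cSUP_least) auto
  qed
qed

end
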